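(* Consider problem (P) under Assumptions (A1)–(A3). Let $\bar{x}\in\mathbb{R}^n$ be a local minimizer for (P). Then $\bar{x}\in\mathcal{X}$ and $\bar{x}$ is critical for (P).
   Context: Problem (P): minimize $f(x)$ subject to $x\in\mathcal{X}:=\bar{\mathcal{X}}\cap\{x\in\mathbb{R}^n : x_i\in\mathbb{Z}\ \forall i\in\mathcal{I}\}$, where $\bar{\mathcal{X}}\subseteq\mathbb{R}^n$ is a closed convex polyhedral set, $\mathcal{I}\subseteq\{1,\dots,n\}$, $\mathcal{X}\neq\emptyset$, and $f:\mathbb{R}^n\to\mathbb{R}$. Partition $x=(u,z)$, where $u$ collects the components with indices not in $\mathcal{I}$ (real-valued) and $z$ those with indices in $\mathcal{I}$ (integer-valued). Standing assumptions: (A1) $f$ is continuously differentiable and $\nabla f$ is locally Lipschitz continuous; (A2) $f(u,z)=f_1(u)+\langle f_2,z\rangle$ for a smooth function $f_1$ and a fixed vector $f_2$; (A3) the set $\{z : (u,z)\in\mathcal{X}\}$ of feasible integer parts is bounded. Partial localization: $\|x\|_{PL}$ denotes a polyhedral norm (the $\ell_1$-norm $\sum_{i\notin\mathcal{I}}|x_i|$ or the $\ell_\infty$-norm $\max_{i\notin\mathcal{I}}|x_i|$) applied only to the components with indices not in $\mathcal{I}$; it is a seminorm. The closed PL-ball is $\mathbb{B}_{PL}(x,\Delta):=\{w\in\mathbb{R}^n: \|w-x\|_{PL}\le\Delta\}$. Local minimizer: $\bar x\in\mathcal{X}$ such that there is $\Delta>0$ with $f(\bar x)\le f(x)$ for all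 $x\in\mathcal{X}\cap\mathbb{B}_{PL}(\bar x,\Delta)$. Criticality measure: for $x\in\mathcal{X}$ and $\Delta\ge 0$, $\Psi(x;\Delta):=\max\{\langle\nabla f(x),x-w\rangle : w\in\mathcal{X}\cap\mathbb{B}_{PL}(x,\Delta)\}$ (so $\Psi\ge0$). A point $\bar x\in\mathcal{X}$ is $\Delta$-critical if $\Psi(\bar x;\Delta)=0$, and critical if it is $\Delta$-critical for some $\Delta>0$. *)

theory Defs
  imports "HOL-Analysis.Analysis"
begin

text \<open>Vectors of R^n are modelled as real^'n for a finite index type 'n.
  I is the set of integer-constrained indices.\<close>

definition feasible_set :: "(real^'n) set \<Rightarrow> 'n set \<Rightarrow> (real^'n) set" where
  "feasible_set Xbar I = Xbar \<inter> {x. \<forall>i\<in>I. x $ i \<in> \<int>}"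

definition pl_norm1 :: "'n::finite set \<Rightarrow> real^'n \<Rightarrow> real" where
  "pl_norm1 I x = (\<Sum>i\<in>-I. \<bar>x $ i\<bar>)"

definition pl_norminf :: "'n::finite set \<Rightarrow> real^'n \<Rightarrow> real" where
  "pl_norminf I x = Max (insert 0 ((\<lambda>i. \<bar>x $ i\<bar>) ` (-I)))"

definition pl_ball :: "(real^'n \<Rightarrow> real) \<Rightarrow> real^'n \<Rightarrow> real \<Rightarrow> (real^'n) set" where
  "pl_ball N x \<Delta> = {w. N (w - x) \<le> \<Delta>}"

definition local_minimizer ::
  "(real^'n \<Rightarrow> real) \<Rightarrow> (real^'n) set \<Rightarrow> (real^'n \<Rightarrow> real) \<Rightarrow> real^'n \<Rightarrow> bool" where
  "local_minimizer f X N xb \<longleftrightarrow> xb \<in> X \<and>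
     (\<exists>\<Delta>>0. \<forall>x\<in>X \<inter> pl_ball N xb \<Delta>. f xb \<le> f x)"

text \<open>Criticality measure; g is the gradient of f. The maximum in the paper is rendered as Sup.\<close>
definition Psi ::
  "(real^'n \<Rightarrow> real^'n) \<Rightarrow> (real^'n) set \<Rightarrow> (real^'n \<Rightarrow> real) \<Rightarrow> real^'n \<Rightarrow> real \<Rightarrow> real" where
  "Psi g X N x \<Delta> = Sup ((\<lambda>w. inner (g x) (x - w)) ` (X \<inter> pl_ball N x \<Delta>))"

definition Delta_critical ::
  "(real^'n \<Rightarrow> real^'n) \<Rightarrow> (real^'n) set \<Rightarrow> (real^'n \<Rightarrow> real) \<Rightarrow> real^'n \<Rightarrow> real \<Rightarrow> bool" where
  "Delta_critical g X N x \<Delta> \<longleftrightarrow> x \<in> X \<and> Psi g X N x \<Delta> = 0"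

definition critical ::
  "(real^'n \<Rightarrow> real^'n) \<Rightarrow> (real^'n) set \<Rightarrow> (real^'n \<Rightarrow> real) \<Rightarrow> real^'n \<Rightarrow> bool" where
  "critical g X N x \<longleftrightarrow> (\<exists>\<Delta>>0. Delta_critical g X N x \<Delta>)"

end

theory Submission
  imports Defs
begin

lemma finite_int_bounded:
  fixes S :: "(real^'n) set"
  assumes "bounded S" "\<And>x i. x \<in> S \<Longrightarrow> x $ i \<in> \<int>"
  shows "finite S"
proof -
  obtain B where B: "\<And>x. x \<in> S \<Longrightarrow> norm x \<le> B" using assms(1) bounded_iff by blast
  define K where "K = {x::real. x \<in> \<int> \<and> \<bar>x\<bar> \<le> B}"
  have "K \<subseteq> of_int ` {-\<lceil>B\<rceil>..\<lceil>B\<rceil>}"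
  proof
    fix x assume "x \<in> K"
    then obtain k where k: "x = of_int k" "\<bar>of_int k\<bar> \<le> B" unfolding K_def by (auto elim: Ints_cases)
    hence "k \<in> {-\<lceil>B\<rceil>..\<lceil>B\<rceil>}" by (auto simp: abs_le_iff) linarith+
    thus "x \<in> of_int ` {-\<lceil>B\<rceil>..\<lceil>B\<rceil>}" using k by auto
  qed
  hence fK: "finite K" by (rule finite_subset) auto
  have "S \<subseteq> vec_lambda ` (PiE UNIV (\<lambda>i. K))"
  proof
    fix x assume x: "x \<in> S"
    have "(\<lambda>i. x $ i) \<in> PiE UNIV (\<lambda>i. K)"
      using x assms(2) B[OF x] component_le_norm_cart[of x] unfolding K_def
      by (auto intro: order_trans)
    thus "x \<in> vec_lambda ` (PiE UNIV (\<lambda>i. K))" by (intro image_eqI[of _ _ "\<lambda>i. x $ i"]) auto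
  qed
  thus ?thesis by (rule finite_subset) (intro finite_imageI finite_PiE fK; simp)
qed

lemma dir_deriv_lb:
  fixes f :: "real^'n \<Rightarrow> real"
  assumes d: "(f has_derivative (\<lambda>h. inner G h)) (at x)"
    and lb: "\<And>t. 0 < t \<Longrightarrow> t \<le> 1 \<Longrightarrow> f (x + t *\<^sub>R v) - f x \<ge> t * a"
  shows "inner G v \<ge> a"
proof -
  have "((\<lambda>t. f (x + t *\<^sub>R v)) has_derivative (\<lambda>t. inner G (t *\<^sub>R v))) (at 0)"
  proof -
    have l: "((\<lambda>t. x + t *\<^sub>R v) has_derivative (\<lambda>t. t *\<^sub>R v)) (at (0::real))"
      by (auto intro!: derivative_eq_intros)
    have d0: "(f has_derivative (\<lambda>h. inner G h)) (at (x + (0::real) *\<^sub>R v))" using d by simp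
    show ?thesis using has_derivative_compose[OF l d0] by (simp add: o_def)
  qed
  hence "((\<lambda>t. f (x + t *\<^sub>R v)) has_real_derivative inner G v) (at 0)"
    by (simp add: has_field_derivative_def mult.commute[of _ "inner G v"])
  hence "((\<lambda>t. (f (x + t *\<^sub>R v) - f x) / t) \<longlongrightarrow> inner G v) (at 0)"
    by (simp add: has_field_derivative_iff)
  hence lim: "((\<lambda>t. (f (x + t *\<^sub>R v) - f x) / t) \<longlongrightarrow> inner G v) (at_right 0)"
    by (rule filterlim_mono) (auto simp: at_le)
  have "eventually (\<lambda>t. a \<le> (f (x + t *\<^sub>R v) - f x) / t) (at_right (0::real))"
    unfolding eventually_at_right_field
    by (rule exI[of _ 1]) (auto intro!: lb simp: pos_le_divide_eq mult.commute)
  thus ?thesis using lim by (intro tendsto_lowerbound[OF lim]) auto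
qed

lemma N_mono:
  assumes PL: "N = pl_norm1 I \<or> N = pl_norminf I"
    and h: "\<And>i. i \<notin> I \<Longrightarrow> \<bar>a $ i\<bar> \<le> \<bar>b $ i\<bar>"
  shows "N a \<le> N b"
  using PL
proof
  assume "N = pl_norm1 I" thus ?thesis unfolding pl_norm1_def by (auto intro!: sum_mono h)
next
  assume N: "N = pl_norminf I"
  show ?thesis unfolding N pl_norminf_def
  proof (subst Max_le_iff, simp, simp, intro ballI)
    fix y assume "y \<in> insert 0 ((\<lambda>i. \<bar>a $ i\<bar>) ` (- I))"
    then show "y \<le> Max (insert 0 ((\<lambda>i. \<bar>b $ i\<bar>) ` (- I)))"
    proof
      assume "y = 0" thus ?thesis by (simp add: Max_ge_iff)
    next
      assume "y \<in> (\<lambda>i. \<bar>a $ i\<bar>) ` (- I)"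
      then obtain i where "i \<notin> I" "y = \<bar>a $ i\<bar>" by auto
      thus ?thesis using h[of i] by (auto simp: Max_ge_iff intro!: bexI[of _ i])
    qed
  qed
qed

lemma N_comp:
  assumes PL: "N = pl_norm1 I \<or> N = pl_norminf I" and "i \<notin> I"
  shows "\<bar>a $ i\<bar> \<le> N a"
  using PL
proof
  assume "N = pl_norm1 I" thus ?thesis unfolding pl_norm1_def
    using member_le_sum[of i "-I" "\<lambda>i. \<bar>a $ i\<bar>"] assms(2) by auto
next
  assume "N = pl_norminf I" thus ?thesis unfolding pl_norminf_def using assms(2)
    by (auto simp: Max_ge_iff)
qed

lemma N_zero:
  assumes PL: "N = pl_norm1 I \<or> N = pl_norminf I"
  shows "N 0 = 0"
  using PL unfolding pl_norm1_def pl_norminf_def by (auto simp: image_constant_conv)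

lemma N_norm:
  assumes PL: "N = pl_norm1 I \<or> N = pl_norminf I"
    and z: "\<And>i. i \<in> I \<Longrightarrow> a $ i = 0"
    and o: "\<And>i. i \<notin> I \<Longrightarrow> \<bar>a $ i\<bar> \<le> \<bar>b $ i\<bar>"
  shows "norm a \<le> real CARD('n) * N (b::real^'n)"
proof -
  have N0: "0 \<le> N b" using N_mono[OF PL, of 0 b] N_zero[OF PL] by simp
  have "norm a \<le> (\<Sum>i\<in>UNIV. \<bar>a$i\<bar>)" by (rule norm_le_l1_cart)
  also have "\<dots> \<le> (\<Sum>i\<in>(UNIV::'n set). N b)"
  proof (rule sum_mono)
    fix i :: 'n
    show "\<bar>a$i\<bar> \<le> N b"
    proof (cases "i \<in> I")
      case True thus ?thesis using z N0 by simp
    next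
      case False thus ?thesis using o[OF False] N_comp[OF PL False, of b] by linarith
    qed
  qed
  also have "\<dots> = real CARD('n) * N b" by simp
  finally show ?thesis .
qed

theorem mainTheorem1:
  fixes f :: "real^'n \<Rightarrow> real"
    and g :: "real^'n \<Rightarrow> real^'n"
    and Xbar :: "(real^'n) set"
    and I :: "'n set"
    and N :: "real^'n \<Rightarrow> real"
    and xb :: "real^'n"
  assumes poly: "polyhedron Xbar"
    and nonempty: "feasible_set Xbar I \<noteq> {}"
    and PL: "N = pl_norm1 I \<or> N = pl_norminf I"
    and A1_grad: "\<And>x. (f has_derivative (\<lambda>h. inner (g x) h)) (at x)"
    and A1_lip: "\<And>x. \<exists>e>0. \<exists>L. \<forall>y\<in>ball x e. \<forall>z\<in>ball x e. norm (g y - g z) \<le> L * dist y z"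
    and A2: "\<exists>f1 f2. (\<forall>x y. (\<forall>i. i \<notin> I \<longrightarrow> x $ i = y $ i) \<longrightarrow> f1 x = f1 y)
               \<and> (\<forall>x. f1 differentiable (at x))
               \<and> (\<forall>x. f x = f1 x + (\<Sum>i\<in>I. f2 $ i * x $ i))"
    and A3: "bounded ((\<lambda>x. \<chi> i. if i \<in> I then x $ i else 0) ` feasible_set Xbar I)"
    and locmin: "local_minimizer f (feasible_set Xbar I) N xb"
  shows "xb \<in> feasible_set Xbar I \<and> critical g (feasible_set Xbar I) N xb"
proof -
  define X where "X = feasible_set Xbar I"
  define P :: "real^'n \<Rightarrow> real^'n" where "P = (\<lambda>x. \<chi> i. if i \<in> I then x $ i else 0)"
  obtain f1 f2 where f1I: "\<And>x y. (\<forall>i. i \<notin> I \<longrightarrow> x $ i = y $ i) \<Longrightarrow> f1 x = f1 y"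
    and fdef: "\<And>x. f x = f1 x + (\<Sum>i\<in>I. f2 $ i * x $ i)" using A2 by blast
  from locmin obtain D0 where xbX: "xb \<in> X" and D0: "D0 > 0"
    and lm: "\<And>x. x \<in> X \<Longrightarrow> N (x - xb) \<le> D0 \<Longrightarrow> f xb \<le> f x"
    unfolding local_minimizer_def X_def pl_ball_def by auto
  have Xmem: "x \<in> X \<longleftrightarrow> x \<in> Xbar \<and> (\<forall>i\<in>I. x $ i \<in> \<int>)" for x
    unfolding X_def feasible_set_def by auto
  have clX: "closed Xbar" and cvX: "convex Xbar"
    using poly polyhedron_imp_closed polyhedron_imp_convex by auto
  let ?G = "g xb"
  have claim: "\<exists>\<delta>>0. \<forall>w\<in>X. P w = p \<longrightarrow> N (w - xb) \<le> \<delta> \<longrightarrow> inner ?G (xb - w) \<le> 0" for p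
  proof (cases "\<exists>w0\<in>X. P w0 = p")
    case False thus ?thesis by (intro exI[of _ 1]) auto
  next
    case True
    then obtain w0 where w0: "w0 \<in> X" "P w0 = p" by auto
    have pI: "i \<in> I \<Longrightarrow> p $ i \<in> \<int>" for i
    proof -
      assume i: "i \<in> I"
      have "p $ i = w0 $ i" using w0(2) i unfolding P_def by (auto simp: vec_eq_iff dest: spec[of _ i])
      thus ?thesis using w0(1) Xmem i by auto
    qed
    have Pw: "w \<in> X \<Longrightarrow> P w = p \<Longrightarrow> i \<in> I \<Longrightarrow> w $ i = p $ i" for w i
      unfolding P_def by (auto simp: vec_eq_iff dest: spec[of _ i])
    define xb' :: "real^'n" where "xb' = (\<chi> i. if i \<in> I then p $ i else xb $ i)"
    have CP: "real CARD('n) > 0" by simp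
    show ?thesis
    proof (cases "xb' \<in> Xbar")
      case False
      define F where "F = Xbar \<inter> (\<Inter>i\<in>I. {w. w $ i = p $ i})"
      have "closed F" unfolding F_def
        by (intro closed_Int clX closed_INT ballI closed_Collect_eq continuous_intros)
      moreover have "xb' \<notin> F" using False unfolding F_def by auto
      ultimately obtain e where e: "e > 0" "ball xb' e \<subseteq> - F"
        using open_contains_ball[of "- F"] by (auto simp: open_Compl)
      show ?thesis
      proof (intro exI[of _ "e / (2 * real CARD('n))"] conjI ballI impI)
        show "e / (2 * real CARD('n)) > 0" using e CP by simp
        fix w assume w: "w \<in> X" "P w = p" "N (w - xb) \<le> e / (2 * real CARD('n))"
        have "norm (w - xb') \<le> real CARD('n) * N (w - xb)"
          by (rule N_norm[OF PL]) (auto simp: xb'_def Pw[OF w(1,2)])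
        also have "\<dots> \<le> real CARD('n) * (e / (2 * real CARD('n)))"
          using w(3) CP by (intro mult_left_mono) auto
        also have "\<dots> < e" using CP e by (simp add: field_simps)
        finally have "w \<in> ball xb' e" by (simp add: dist_norm norm_minus_commute)
        moreover have "w \<in> F" using w Pw[OF w(1,2)] Xmem unfolding F_def by auto
        ultimately show "inner ?G (xb - w) \<le> 0" using e by auto
      qed
    next
      case True
      have xb'X: "xb' \<in> X" using True pI Xmem by (auto simp: xb'_def)
      define c where "c = (\<Sum>i\<in>I. f2 $ i * (p $ i - xb $ i))"
      have f1xb': "f1 xb' = f1 xb" by (rule f1I) (auto simp: xb'_def)
      have sumdiff: "(\<Sum>i\<in>I. f2 $ i * xb' $ i) - (\<Sum>i\<in>I. f2 $ i * xb $ i) = c"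
        unfolding c_def sum_subtractf[symmetric] by (rule sum.cong) (auto simp: xb'_def algebra_simps)
      have fc: "f xb' - f xb = c" using sumdiff f1xb' fdef[of xb'] fdef[of xb] by simp
      have "N (xb' - xb) \<le> N 0" by (rule N_mono[OF PL]) (auto simp: xb'_def)
      hence "f xb \<le> f xb'" using lm[OF xb'X] N_zero[OF PL] D0 by simp
      hence c0: "c \<ge> 0" using fc by simp
      show ?thesis
      proof (cases "c > 0")
        case True
        define d where "d = xb' - xb"
        have line: "f (xb + t *\<^sub>R (s *\<^sub>R d)) - f xb = t * (s * c)" for t s
        proof -
          have "f1 (xb + t *\<^sub>R (s *\<^sub>R d)) = f1 xb" by (rule f1I) (auto simp: d_def xb'_def)
          moreover have "(\<Sum>i\<in>I. f2 $ i * (xb + t *\<^sub>R (s *\<^sub>R d)) $ i) - (\<Sum>i\<in>I. f2 $ i * xb $ i)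
              = t * (s * c)"
            unfolding c_def sum_subtractf[symmetric] sum_distrib_left
            by (rule sum.cong) (auto simp: d_def xb'_def algebra_simps)
          ultimately show ?thesis using fdef[of xb] fdef[of "xb + t *\<^sub>R (s *\<^sub>R d)"] by simp
        qed
        have "inner ?G (1 *\<^sub>R d) \<ge> 1 * c"
          by (rule dir_deriv_lb[OF A1_grad]) (simp only: line order_refl)
        moreover have "inner ?G ((-1) *\<^sub>R d) \<ge> (-1) * c"
          by (rule dir_deriv_lb[OF A1_grad]) (simp only: line order_refl)
        ultimately have Gd: "inner ?G d = c" by simp
        define K where "K = 1 + norm ?G * real CARD('n)"
        have K: "K > 0" "norm ?G * real CARD('n) \<ge> 0" unfolding K_def by (auto simp: add_pos_nonneg)
        show ?thesis
        proof (intro exI[of _ "c / K"] conjI ballI impI)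
          show "c / K > 0" using True K by simp
          fix w assume w: "w \<in> X" "P w = p" "N (w - xb) \<le> c / K"
          have nw: "norm (xb' - w) \<le> real CARD('n) * N (w - xb)"
            by (rule N_norm[OF PL]) (auto simp: xb'_def Pw[OF w(1,2)])
          have "inner ?G (xb' - w) \<le> norm ?G * norm (xb' - w)" by (rule norm_cauchy_schwarz)
          also have "\<dots> \<le> norm ?G * (real CARD('n) * (c / K))"
            using nw w(3) CP by (intro mult_left_mono order_trans[OF nw]) auto
          also have "\<dots> = (norm ?G * real CARD('n)) * c / K" by simp
          also have "\<dots> \<le> c"
            using K True by (simp add: divide_le_eq K_def algebra_simps)
          finally have "inner ?G (xb' - w) \<le> c" .
          moreover have "inner ?G (xb - w) = inner ?G (xb' - w) - inner ?G d"
            unfolding d_def by (simp add: inner_diff_right)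
          ultimately show "inner ?G (xb - w) \<le> 0" using Gd by simp
        qed
      next
        case False
        hence c00: "c = 0" using c0 by simp
        show ?thesis
        proof (intro exI[of _ D0] conjI ballI impI)
          show "D0 > 0" by fact
          fix w assume w: "w \<in> X" "P w = p" "N (w - xb) \<le> D0"
          have "inner ?G (w - xb) \<ge> 0"
          proof (rule dir_deriv_lb[OF A1_grad, where a = 0])
            fix t :: real assume t: "0 < t" "t \<le> 1"
            define y where "y = xb' + t *\<^sub>R (w - xb')"
            have "y = (1 - t) *\<^sub>R xb' + t *\<^sub>R w" unfolding y_def by (simp add: algebra_simps)
            hence "y \<in> Xbar" using cvX True w(1) Xmem t by (auto intro: convexD)
            moreover have "\<forall>i\<in>I. y $ i \<in> \<int>" using pI Pw[OF w(1,2)] by (auto simp: y_def xb'_def)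
            ultimately have yX: "y \<in> X" using Xmem by auto
            have "N (y - xb) \<le> N (w - xb)"
            proof (rule N_mono[OF PL])
              fix i assume "i \<notin> I"
              hence "(y - xb) $ i = t * (w - xb) $ i" by (simp add: y_def xb'_def algebra_simps)
              thus "\<bar>(y - xb) $ i\<bar> \<le> \<bar>(w - xb) $ i\<bar>" using t
                by (simp add: abs_mult mult_left_le_one_le)
            qed
            hence fy: "f xb \<le> f y" using lm[OF yX] w(3) by simp
            have "f1 (xb + t *\<^sub>R (w - xb)) = f1 y" by (rule f1I) (auto simp: y_def xb'_def algebra_simps)
            moreover have s1: "(\<Sum>i\<in>I. f2 $ i * w $ i) = (\<Sum>i\<in>I. f2 $ i * p $ i)"
              using Pw[OF w(1,2)] by simp
            have s2: "(\<Sum>i\<in>I. f2 $ i * p $ i) = (\<Sum>i\<in>I. f2 $ i * xb $ i)"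
              using c00 unfolding c_def by (simp add: algebra_simps sum_subtractf)
            have "(\<Sum>i\<in>I. f2 $ i * (xb + t *\<^sub>R (w - xb)) $ i)
                = (\<Sum>i\<in>I. f2 $ i * xb $ i) + t * ((\<Sum>i\<in>I. f2 $ i * w $ i) - (\<Sum>i\<in>I. f2 $ i * xb $ i))"
              by (simp add: sum_distrib_left sum_subtractf[symmetric] sum.distrib[symmetric] algebra_simps)
            moreover have "(\<Sum>i\<in>I. f2 $ i * y $ i) = (\<Sum>i\<in>I. f2 $ i * p $ i)"
              using Pw[OF w(1,2)] by (intro sum.cong) (auto simp: y_def xb'_def)
            ultimately have "f (xb + t *\<^sub>R (w - xb)) = f y"
              using fdef[of y] fdef[of "xb + t *\<^sub>R (w - xb)"] s1 s2 by simp
            thus "t * 0 \<le> f (xb + t *\<^sub>R (w - xb)) - f xb" using fy by simp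
          qed
          thus "inner ?G (xb - w) \<le> 0" by (simp add: inner_diff_right)
        qed
      qed
    qed
  qed
  have fin: "finite (P ` X)"
  proof (rule finite_int_bounded)
    show "bounded (P ` X)" using A3 unfolding P_def X_def .
    fix x i assume "x \<in> P ` X" thus "x $ i \<in> \<int>" using Xmem unfolding P_def by auto
  qed
  have ev: "eventually (\<lambda>\<delta>. \<forall>w\<in>X. P w = p \<longrightarrow> N (w - xb) \<le> \<delta> \<longrightarrow> inner ?G (xb - w) \<le> 0) (at_right 0)" for p
  proof -
    obtain \<delta> where "\<delta> > 0" "\<forall>w\<in>X. P w = p \<longrightarrow> N (w - xb) \<le> \<delta> \<longrightarrow> inner ?G (xb - w) \<le> 0"
      using claim by blast
    thus ?thesis unfolding eventually_at_right_field
      by (intro exI[of _ \<delta>]) force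
  qed
  have "eventually (\<lambda>\<delta>. (\<forall>p\<in>P ` X. \<forall>w\<in>X. P w = p \<longrightarrow> N (w - xb) \<le> \<delta> \<longrightarrow> inner ?G (xb - w) \<le> 0)
      \<and> \<delta> > 0) (at_right (0::real))"
  proof (rule eventually_conj)
    show "eventually (\<lambda>\<delta>. \<forall>p\<in>P ` X. \<forall>w\<in>X. P w = p \<longrightarrow> N (w - xb) \<le> \<delta> \<longrightarrow> inner ?G (xb - w) \<le> 0) (at_right (0::real))"
      by (rule eventually_ball_finite[OF fin]) (use ev in blast)
    show "eventually (\<lambda>\<delta>. \<delta> > 0) (at_right (0::real))" by (rule eventually_at_right_less)
  qed
  then obtain \<Delta> where \<Delta>: "\<Delta> > 0"
    and H: "\<And>w. w \<in> X \<Longrightarrow> N (w - xb) \<le> \<Delta> \<Longrightarrow> inner ?G (xb - w) \<le> 0"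
    using eventually_happens[of _ "at_right (0::real)"] by (force simp: trivial_limit_at_right_real)
  have "Psi g X N xb \<Delta> = 0"
    unfolding Psi_def
  proof (rule cSup_eq_maximum)
    show "0 \<in> (\<lambda>w. inner ?G (xb - w)) ` (X \<inter> pl_ball N xb \<Delta>)"
      using xbX \<Delta> N_zero[OF PL] by (auto simp: pl_ball_def intro!: image_eqI[of _ _ xb])
    fix y assume "y \<in> (\<lambda>w. inner ?G (xb - w)) ` (X \<inter> pl_ball N xb \<Delta>)"
    thus "y \<le> 0" using H by (auto simp: pl_ball_def)
  qed
  thus ?thesis using xbX \<Delta> unfolding critical_def Delta_critical_def X_def by auto
qed

end
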